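(* Let $A\in\mathbb{R}^{m\times n}$ with $n>m$, and let $A=U_A\Sigma_AV_A^T$ be its economy SVD, $V_A\in\mathbb{R}^{n\times m}$ with orthonormal columns. Let $\lambda>0$. Let $X\in\mathbb{R}^{n\times s}$ with $n>s>m$ be a matrix such that, for some $0<\epsilon<1$, $$1-\epsilon<\sigma_{\min}(X^TV_A)\le\sigma_{\max}(X^TV_A)<1+\epsilon .$$ Suppose $R\in\mathbb{R}^{m\times m}$ is an upper triangular matrix such that $R^TR=AXX^TA^T+\lambda I_m$. Then $$\kappa_2(R^{-T}D)\le\frac{1+\epsilon}{1-\epsilon},\qquad\text{where } D=\begin{bmatrix}A & \sqrt{\lambda}I_m\end{bmatrix}\in\mathbb{R}^{m\times(n+m)}.$$
   Context: $\sigma_{\min},\sigma_{\max}$ denote the smallest and largest singular values (of the $s\times m$ matrix $X^TV_A$, among its $m$ singular values), and $\kappa_2(M)=\sigma_{\max}(M)/\sigma_{\min}(M)$ is the spectral condition number of a full-row-rank matrix $M$ (ratio of largest to smallest of its $m$ singular values). Note $R$ is invertible since $R^TR$ is positive definite. *)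

theory Defs
  imports "HOL-Analysis.Analysis"
begin

definition eigenvalues_of :: "real^'n^'n \<Rightarrow> real set" where
  "eigenvalues_of M = {l. \<exists>v. v \<noteq> 0 \<and> M *v v = l *\<^sub>R v}"

text \<open>The min(p,q) singular values of a p x q real matrix (as a set):
  square roots of the eigenvalues of the smaller Gram matrix.\<close>
definition singular_values :: "real^'c^'r \<Rightarrow> real set" where
  "singular_values M =
     (if CARD('c) \<le> CARD('r) then sqrt ` eigenvalues_of (transpose M ** M)
      else sqrt ` eigenvalues_of (M ** transpose M))"

definition sigma_min :: "real^'c^'r \<Rightarrow> real" where
  "sigma_min M = Min (singular_values M)"

definition sigma_max :: "real^'c^'r \<Rightarrow> real" where
  "sigma_max M = Max (singular_values M)"

definition kappa2 :: "real^'c^'r \<Rightarrow> real" where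
  "kappa2 M = sigma_max M / sigma_min M"

definition diagonal_mat :: "real^'n^'n \<Rightarrow> bool" where
  "diagonal_mat S \<longleftrightarrow> (\<forall>i j. i \<noteq> j \<longrightarrow> S $ i $ j = 0)"

definition upper_triangular :: "((real, 'k::{finite,linorder}) vec, 'k) vec \<Rightarrow> bool" where
  "upper_triangular R \<longleftrightarrow> (\<forall>i j. j < i \<longrightarrow> R $ i $ j = 0)"

text \<open>The block matrix [A, sqrt(lam) I_m] of size m x (n+m).\<close>
definition aug_mat :: "real^'n^'m \<Rightarrow> real \<Rightarrow> real^('n + 'm)^'m" where
  "aug_mat A lam = (\<chi> i j. case j of Inl k \<Rightarrow> A $ i $ k
                                   | Inr k \<Rightarrow> (if k = i then sqrt lam else 0))"

end

theory Submission imports Defs "HOL-Library.Cardinality" begin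

lemma sym_inner:
  fixes G :: "real^'k^'k" assumes "transpose G = G"
  shows "x \<bullet> (G *v y) = y \<bullet> (G *v x)"
proof -
  have "x \<bullet> (G *v y) = (x v* G) \<bullet> y" by (simp add: dot_lmul_matrix)
  also have "x v* G = G *v x" by (metis assms vector_transpose_matrix)
  finally show ?thesis by (simp add: inner_commute)
qed

lemma quad_form:
  fixes A :: "real^'a^'b"
  shows "(A *v x) \<bullet> (A *v x) = x \<bullet> ((transpose A ** A) *v x)"
proof -
  have "x \<bullet> ((transpose A ** A) *v x) = x \<bullet> (transpose A *v (A *v x))"
    by (simp only: matrix_vector_mul_assoc)
  also have "\<dots> = (x v* transpose A) \<bullet> (A *v x)"
    by (simp only: dot_lmul_matrix)
  also have "\<dots> = (A *v x) \<bullet> (A *v x)" by simp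
  finally show ?thesis by simp
qed

lemma quad_zero:
  fixes b c :: real
  assumes "\<forall>t. 0 \<le> 2*t*b + t^2*c"
  shows "b = 0"
proof (rule ccontr)
  assume b: "b \<noteq> 0"
  define d where "d = \<bar>c\<bar> + 1"
  have d: "d > 0" by (simp add: d_def)
  have "0 \<le> 2*(-b/d)*b + (-b/d)^2*c" using assms by blast
  also have "\<dots> = b^2 * (c - 2*d) / d^2" using d
    by (simp add: field_simps power2_eq_square)
  finally have "0 \<le> b^2 * (c - 2*d)" using d
    by (simp add: zero_le_divide_iff)
  moreover have "c - 2*d < 0" unfolding d_def by (simp add: abs_if)
  moreover have "b^2 > 0" using b by simp
  ultimately show False by (simp add: mult_pos_neg not_le[symmetric] zero_le_mult_iff)
qed

lemma sym_min_eig: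
  fixes G :: "real^'k^'k" assumes sym: "transpose G = G"
  shows "\<exists>m \<in> eigenvalues_of G. \<forall>x. m * (x \<bullet> x) \<le> x \<bullet> (G *v x)"
proof -
  define f where "f = (\<lambda>x::real^'k. x \<bullet> (G *v x))"
  have cont: "continuous_on (sphere 0 1) f" unfolding f_def
    by (intro continuous_intros)
  have ne: "sphere (0::real^'k) 1 \<noteq> {}"
    using norm_axis_1[of undefined] by (metis dist_0_norm mem_sphere empty_iff)
  obtain u where u: "u \<in> sphere 0 1" and umin: "\<forall>y\<in>sphere 0 1. f u \<le> f y"
    using continuous_attains_inf[OF compact_sphere ne cont] by blast
  define m where "m = f u"
  have uu: "u \<bullet> u = 1" using u by (simp add: dot_square_norm)
  have fscale: "f (c *\<^sub>R x) = c^2 * f x" for c x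
    by (simp add: f_def matrix_vector_mult_scaleR power2_eq_square)
  have bound: "m * (x \<bullet> x) \<le> f x" for x
  proof (cases "x = 0")
    case True then show ?thesis by (simp add: f_def)
  next
    case False
    then have n: "norm x > 0" by simp
    have "x /\<^sub>R norm x \<in> sphere 0 1" using n by simp
    then have "m \<le> f (x /\<^sub>R norm x)" using umin m_def by blast
    also have "f (x /\<^sub>R norm x) = f x / (norm x)^2"
      using fscale[of "inverse (norm x)" x] by (simp add: power_inverse divide_inverse mult.commute)
    finally have "m * (norm x)^2 \<le> f x" using n by (simp add: pos_le_divide_eq)
    then show ?thesis by (simp add: dot_square_norm)
  qed
  have sym2: "\<And>a b. a \<bullet> (G *v b) = b \<bullet> (G *v a)" using sym_inner[OF sym] .
  have orth: "w \<bullet> (G *v u - m *\<^sub>R u) = 0" for w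
  proof -
    let ?b = "w \<bullet> (G *v u - m *\<^sub>R u)"
    let ?c = "f w - m * (w \<bullet> w)"
    have "0 \<le> 2*t*?b + t^2*?c" for t
    proof -
      have "m * ((u + t *\<^sub>R w) \<bullet> (u + t *\<^sub>R w)) \<le> f (u + t *\<^sub>R w)" by (rule bound)
      moreover have "(u + t *\<^sub>R w) \<bullet> (u + t *\<^sub>R w) = 1 + 2*t*(u \<bullet> w) + t^2 * (w \<bullet> w)"
        using uu by (simp add: inner_add_left inner_add_right inner_commute power2_eq_square)
      moreover have "f (u + t *\<^sub>R w) = m + 2*t*(w \<bullet> (G *v u)) + t^2 * f w"
        using sym2[of u w] by (simp add: f_def m_def matrix_vector_right_distrib matrix_vector_mult_scaleR
              inner_add_left inner_add_right power2_eq_square algebra_simps)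
      ultimately have "m * (1 + 2*t*(u \<bullet> w) + t^2 * (w \<bullet> w)) \<le> m + 2*t*(w \<bullet> (G *v u)) + t^2 * f w"
        by simp
      then show ?thesis
        by (simp add: inner_diff_right inner_commute algebra_simps power2_eq_square)
    qed
    then show ?thesis using quad_zero by blast
  qed
  have "G *v u - m *\<^sub>R u = 0" using orth[of "G *v u - m *\<^sub>R u"] by simp
  then have "G *v u = m *\<^sub>R u" by simp
  moreover have "u \<noteq> 0" using u by auto
  ultimately have "m \<in> eigenvalues_of G" unfolding eigenvalues_of_def by blast
  then show ?thesis using bound unfolding f_def by blast
qed

lemma eig_rayleigh:
  fixes G :: "real^'k^'k"
  assumes "G *v v = l *\<^sub>R v"
  shows "v \<bullet> (G *v v) = l * (v \<bullet> v)"
  using assms by simp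

lemma sym_eig_finite:
  fixes G :: "real^'k^'k" assumes sym: "transpose G = G"
  shows "finite (eigenvalues_of G)"
proof -
  let ?E = "eigenvalues_of G"
  define f where "f l = (SOME v. v \<noteq> 0 \<and> G *v v = l *\<^sub>R v)" for l
  have fE: "f l \<noteq> 0 \<and> G *v f l = l *\<^sub>R f l" if "l \<in> ?E" for l
    using that unfolding eigenvalues_of_def f_def mem_Collect_eq by (rule someI_ex)
  have inj: "inj_on f ?E"
  proof (rule inj_onI)
    fix a b assume a: "a \<in> ?E" and b: "b \<in> ?E" and e: "f a = f b"
    have "a *\<^sub>R f a = b *\<^sub>R f a" using fE[OF a] fE[OF b] e by metis
    then show "a = b" using fE[OF a] by (metis scaleR_cancel_right)
  qed
  have "pairwise orthogonal (f ` ?E)"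
  proof (rule pairwiseI)
    fix x y assume "x \<in> f ` ?E" "y \<in> f ` ?E" "x \<noteq> y"
    then obtain a b where a: "a \<in> ?E" "x = f a" and b: "b \<in> ?E" "y = f b"
      by blast
    have ab: "a \<noteq> b" using a b \<open>x \<noteq> y\<close> by blast
    have "a * (y \<bullet> x) = y \<bullet> (G *v x)" using fE[OF a(1)] a(2) by (simp add: inner_scaleR_right)
    also have "\<dots> = x \<bullet> (G *v y)" by (rule sym_inner[OF sym])
    also have "\<dots> = b * (x \<bullet> y)" using fE[OF b(1)] b(2) by simp
    finally have "a * (x \<bullet> y) = b * (x \<bullet> y)" by (metis inner_commute)
    then have "x \<bullet> y = 0" using ab by simp
    then show "orthogonal x y" unfolding orthogonal_def .
  qed
  moreover have "0 \<notin> f ` ?E"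
  proof
    assume "0 \<in> f ` ?E"
    then obtain l where "l \<in> ?E" "0 = f l" by blast
    then show False using fE by metis
  qed
  ultimately have "independent (f ` ?E)" by (rule pairwise_orthogonal_independent)
  then have "finite (f ` ?E)" by (rule independent_imp_finite)
  then show ?thesis using inj by (rule finite_imageD)
qed

lemma transpose_uminus: "transpose (- (G::real^'k^'k)) = - transpose G"
  by (simp add: transpose_def vec_eq_iff)

lemma sym_max_eig:
  fixes G :: "real^'k^'k" assumes sym: "transpose G = G"
  shows "\<exists>m \<in> eigenvalues_of G. \<forall>x. x \<bullet> (G *v x) \<le> m * (x \<bullet> x)"
proof -
  have neg: "(- G) *v x = - (G *v x)" for x
    by (simp add: matrix_vector_mult_def vec_eq_iff sum_negf)
  have "transpose (- G) = - G" using sym by (simp add: transpose_uminus)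
  from sym_min_eig[OF this] obtain m where m: "m \<in> eigenvalues_of (- G)"
    and b: "\<forall>x. m * (x \<bullet> x) \<le> x \<bullet> ((- G) *v x)" by blast
  from m obtain v where "v \<noteq> 0" "(- G) *v v = m *\<^sub>R v" unfolding eigenvalues_of_def by blast
  moreover have "G *v v = - ((- G) *v v)" unfolding neg[of v] by (rule minus_minus[symmetric])
  ultimately have "v \<noteq> 0" "G *v v = (- m) *\<^sub>R v" by (simp_all only: scaleR_minus_left not_False_eq_True)
  then have "- m \<in> eigenvalues_of G" unfolding eigenvalues_of_def by blast
  moreover have "\<forall>x. x \<bullet> (G *v x) \<le> (- m) * (x \<bullet> x)" 
  proof
    fix x show "x \<bullet> (G *v x) \<le> (- m) * (x \<bullet> x)" using spec[OF b, of x] unfolding neg inner_minus_right by linarith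
  qed
  ultimately show ?thesis by blast
qed

lemma aug_gram:
  fixes A :: "real^'n^'m"
  assumes "lam \<ge> 0"
  shows "aug_mat A lam ** transpose (aug_mat A lam) = A ** transpose A + lam *\<^sub>R mat 1"
proof -
  have "(aug_mat A lam ** transpose (aug_mat A lam)) $ i $ j = (A ** transpose A + lam *\<^sub>R mat 1) $ i $ j" for i j
  proof -
    have "(aug_mat A lam ** transpose (aug_mat A lam)) $ i $ j
        = (\<Sum>k\<in>UNIV <+> UNIV. aug_mat A lam $ i $ k * aug_mat A lam $ j $ k)"
      by (simp add: matrix_matrix_mult_def transpose_def)
    also have "\<dots> = (\<Sum>k\<in>UNIV. A $ i $ k * A $ j $ k) +
        (\<Sum>k\<in>UNIV. (if k = i then sqrt lam else 0) * (if k = j then sqrt lam else 0))"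
      by (subst sum.Plus) (simp_all add: aug_mat_def o_def)
    also have "(\<Sum>k\<in>UNIV. (if k = i then sqrt lam else 0) * (if k = j then sqrt lam else 0))
        = (if i = j then lam else 0)"
    proof -
      have "(\<lambda>k. (if k = i then sqrt lam else 0) * (if k = j then sqrt lam else 0))
          = (\<lambda>k. if k = i then (if i = j then lam else 0) else 0)"
        using assms by (auto simp: fun_eq_iff)
      then show ?thesis by (simp only:) simp
    qed
    finally show ?thesis
      by (simp add: matrix_matrix_mult_def transpose_def mat_def)
  qed
  then show ?thesis by (simp add: vec_eq_iff)
qed


lemma arith_bound:
  fixes a b c lam mu lo hi :: real
  assumes "a \<ge> 0" "c > 0" "lam > 0" "0 < lo" "lo \<le> 1" "1 \<le> hi"
    "lo * a \<le> b" "b \<le> hi * a" "a + lam * c = mu * (b + lam * c)"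
  shows "1 / hi \<le> mu \<and> mu \<le> 1 / lo"
proof -
  have lc: "lam * c > 0" using assms by simp
  have b0: "b \<ge> 0" using assms by (metis mult_nonneg_nonneg order.trans less_imp_le)
  have s: "b + lam * c > 0" using lc b0 by linarith
  have mu: "mu = (a + lam * c) / (b + lam * c)" using assms(9) s by (simp add: field_simps)
  have h1: "lam * c \<le> hi * (lam * c)" using mult_right_mono[of 1 hi "lam*c"] lc assms(6) by simp
  have h2: "lo * (lam * c) \<le> lam * c" using mult_right_mono[of lo 1 "lam*c"] lc assms(5) by simp
  have hi0: "hi > 0" using assms(6) by linarith
  have "b + lam * c \<le> hi * (a + lam * c)" using h1 assms(8) by (simp add: algebra_simps)
  then have g1: "1 / hi \<le> (a + lam * c) / (b + lam * c)" using s hi0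
    by (simp add: divide_simps mult.commute)
  have "lo * (a + lam * c) \<le> b + lam * c" using h2 assms(7) by (simp add: algebra_simps)
  then have g2: "(a + lam * c) / (b + lam * c) \<le> 1 / lo" using s assms(4)
    by (simp add: divide_simps mult.commute)
  show ?thesis using g1 g2 mu by simp
qed

theorem lemma2p2:
  fixes A :: "((real, 'n::finite) vec, 'm::{finite,linorder}) vec"
    and U :: "((real, 'm) vec, 'm) vec" and S :: "((real, 'm) vec, 'm) vec"
    and V :: "((real, 'm) vec, 'n) vec"
    and X :: "real^'s^'n" and R :: "((real, 'm) vec, 'm) vec"
    and lam eps :: real
  assumes dims: "CARD('n) > CARD('m)" "CARD('n) > CARD('s)" "CARD('s) > CARD('m)"
    and svd: "A = U ** S ** transpose V"
      "transpose U ** U = mat 1" "U ** transpose U = mat 1"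
      "diagonal_mat S" "\<forall>i. S $ i $ i \<ge> 0"
      "transpose V ** V = mat 1"
    and lam: "lam > 0"
    and eps: "0 < eps" "eps < 1"
    and X: "1 - eps < sigma_min (transpose X ** V)" "sigma_max (transpose X ** V) < 1 + eps"
    and R: "upper_triangular R"
      "transpose R ** R = A ** X ** transpose X ** transpose A + lam *\<^sub>R mat 1"
  shows "kappa2 (matrix_inv (transpose R) ** aug_mat A lam) \<le> (1 + eps) / (1 - eps)"
proof -
  define W where "W = U ** S"
  have AW: "A = W ** transpose V" using svd(1) by (simp add: W_def)
  define C where "C = transpose X ** V"
  define G where "G = transpose C ** C"
  have Gsym: "transpose G = G" unfolding G_def by (simp add: matrix_transpose_mul)
  have svG: "singular_values C = sqrt ` eigenvalues_of G"
    unfolding singular_values_def G_def using dims by simp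
  have finG: "finite (eigenvalues_of G)" by (rule sym_eig_finite[OF Gsym])
  obtain mG where mG: "mG \<in> eigenvalues_of G" "\<forall>x. mG * (x \<bullet> x) \<le> x \<bullet> (G *v x)"
    using sym_min_eig[OF Gsym] by blast
  obtain MG where MG: "MG \<in> eigenvalues_of G" "\<forall>x. x \<bullet> (G *v x) \<le> MG * (x \<bullet> x)"
    using sym_max_eig[OF Gsym] by blast
  have "sigma_min C \<le> sqrt mG" unfolding sigma_min_def svG using finG mG(1) by (simp add: Min_le)
  then have smG: "1 - eps < sqrt mG" using X(1) C_def by simp
  have lo: "(1 - eps)^2 < mG"
  proof -
    have p: "0 < sqrt mG" using smG eps by linarith
    then have "0 < mG" by simp
    have "(1 - eps)^2 < (sqrt mG)^2" using smG eps by (intro power_strict_mono) auto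
    then show ?thesis using \<open>0 < mG\<close> by simp
  qed
  have "sqrt MG \<le> sigma_max C" unfolding sigma_max_def svG using finG MG(1) by (simp add: Max_ge)
  then have sMG: "sqrt MG < 1 + eps" using X(2) C_def by simp
  have hi: "MG < (1 + eps)^2"
  proof (cases "MG \<le> 0")
    case True then show ?thesis using eps by (smt (verit) zero_less_power)
  next
    case False
    have "(sqrt MG)^2 < (1 + eps)^2" using sMG False by (intro power_strict_mono) auto
    then show ?thesis using False by simp
  qed
  have AT: "transpose A = V ** transpose W" using AW by (simp add: matrix_transpose_mul)
  define B where "B = transpose X ** transpose A"
  have BtB: "A ** X ** transpose X ** transpose A = transpose B ** B"
    by (simp add: B_def matrix_transpose_mul matrix_mul_assoc)
  have Vz: "(V *v z) \<bullet> (V *v z) = z \<bullet> z" for z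
    by (simp only: quad_form svd(6) matrix_vector_mul_lid)
  have ATy: "transpose A *v y = V *v (transpose W *v y)" for y
    by (simp only: AT matrix_vector_mul_assoc)
  have qa: "y \<bullet> ((A ** transpose A) *v y) = (transpose W *v y) \<bullet> (transpose W *v y)" for y
  proof -
    have "y \<bullet> ((A ** transpose A) *v y) = (transpose A *v y) \<bullet> (transpose A *v y)"
      using quad_form[of "transpose A" y] by (simp only: transpose_transpose)
    also have "\<dots> = (transpose W *v y) \<bullet> (transpose W *v y)" by (simp only: ATy Vz)
    finally show ?thesis .
  qed
  have qb: "(1 - eps)^2 * ((transpose W *v y) \<bullet> (transpose W *v y)) \<le> y \<bullet> ((transpose B ** B) *v y)
     \<and> y \<bullet> ((transpose B ** B) *v y) \<le> (1 + eps)^2 * ((transpose W *v y) \<bullet> (transpose W *v y))" for y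
  proof -
    define z where "z = transpose W *v y"
    have "y \<bullet> ((transpose B ** B) *v y) = (B *v y) \<bullet> (B *v y)" by (simp only: quad_form)
    also have "B *v y = C *v z"
      by (simp only: B_def C_def z_def matrix_vector_mul_assoc[symmetric] ATy)
    also have "(C *v z) \<bullet> (C *v z) = z \<bullet> (G *v z)" by (simp only: quad_form G_def)
    finally have e: "y \<bullet> ((transpose B ** B) *v y) = z \<bullet> (G *v z)" .
    have zz: "z \<bullet> z \<ge> 0" by simp
    have "(1 - eps)^2 * (z \<bullet> z) \<le> mG * (z \<bullet> z)" using lo zz by (intro mult_right_mono) auto
    also have "\<dots> \<le> z \<bullet> (G *v z)" using mG(2) by blast
    finally have 1: "(1 - eps)^2 * (z \<bullet> z) \<le> z \<bullet> (G *v z)" .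
    have "z \<bullet> (G *v z) \<le> MG * (z \<bullet> z)" using MG(2) by blast
    also have "\<dots> \<le> (1 + eps)^2 * (z \<bullet> z)" using hi zz by (intro mult_right_mono) auto
    finally have 2: "z \<bullet> (G *v z) \<le> (1 + eps)^2 * (z \<bullet> z)" .
    show ?thesis using 1 2 e z_def by simp
  qed
  define K where "K = A ** X ** transpose X ** transpose A + lam *\<^sub>R mat 1"
  have Kq: "y \<bullet> (K *v y) = y \<bullet> ((transpose B ** B) *v y) + lam * (y \<bullet> y)" for y
  proof -
    have "K *v y = (transpose B ** B) *v y + lam *\<^sub>R y"
      unfolding K_def BtB matrix_vector_mult_add_rdistrib scaleR_matrix_vector_assoc[symmetric]
      by simp
    then show ?thesis by (simp add: inner_add_right)
  qed
  have Bnn: "y \<bullet> ((transpose B ** B) *v y) \<ge> 0" for y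
    by (simp only: quad_form[symmetric] inner_ge_zero)
  have Rq: "(R *v y) \<bullet> (R *v y) = y \<bullet> (K *v y)" for y
    by (simp only: quad_form R(2) K_def)
  have Rinj: "\<forall>y. R *v y = 0 \<longrightarrow> y = 0"
  proof (intro allI impI)
    fix y assume "R *v y = 0"
    then have "y \<bullet> (K *v y) = 0" using Rq[of y] by simp
    then have "lam * (y \<bullet> y) \<le> 0" using Kq[of y] Bnn[of y] by linarith
    then have "y \<bullet> y \<le> 0" using lam by (simp add: mult_le_0_iff)
    then show "y = 0" by (metis inner_eq_zero_iff inner_ge_zero order_antisym)
  qed
  obtain Bi where Bi: "Bi ** R = mat 1" using matrix_left_invertible_ker[of R] Rinj by blast
  then have Bi2: "R ** Bi = mat 1" using matrix_left_right_inverse by blast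
  define Ri where "Ri = matrix_inv (transpose R)"
  have Ri: "transpose R ** Ri = mat 1 \<and> Ri ** transpose R = mat 1"
  proof -
    have "transpose R ** transpose Bi = mat 1 \<and> transpose Bi ** transpose R = mat 1"
      using Bi Bi2 by (metis matrix_transpose_mul transpose_mat)
    then show ?thesis unfolding Ri_def matrix_inv_def by (rule someI)
  qed
  have RRi: "R ** transpose Ri = mat 1"
    using Ri by (metis matrix_transpose_mul transpose_mat transpose_transpose)
  define D where "D = aug_mat A lam"
  define M where "M = Ri ** D"
  define P where "P = M ** transpose M"
  have Psym: "transpose P = P" by (simp add: P_def matrix_transpose_mul)
  have svM: "singular_values M = sqrt ` eigenvalues_of P"
    unfolding singular_values_def P_def using dims by simp
  have finE: "finite (eigenvalues_of P)" by (rule sym_eig_finite[OF Psym])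
  obtain m0 where m0: "m0 \<in> eigenvalues_of P" using sym_min_eig[OF Psym] by blast
  have DD: "D ** transpose D = A ** transpose A + lam *\<^sub>R mat 1"
    unfolding D_def using lam by (intro aug_gram) simp
  have bnd: "1 / (1 + eps)^2 \<le> mu \<and> mu \<le> 1 / (1 - eps)^2" if mu: "mu \<in> eigenvalues_of P" for mu
  proof -
    obtain v where v: "v \<noteq> 0" "P *v v = mu *\<^sub>R v" using mu unfolding eigenvalues_of_def by blast
    define y where "y = transpose Ri *v v"
    have Ry: "R *v y = v" unfolding y_def matrix_vector_mul_assoc RRi by simp
    have y0: "y \<noteq> 0" using Ry v(1) by auto
    have MTv: "transpose M *v v = transpose D *v y"
      by (simp only: M_def y_def matrix_transpose_mul matrix_vector_mul_assoc)
    have "v \<bullet> (P *v v) = (transpose M *v v) \<bullet> (transpose M *v v)"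
      using quad_form[of "transpose M" v] by (simp only: transpose_transpose P_def)
    also have "\<dots> = y \<bullet> ((D ** transpose D) *v y)"
      using quad_form[of "transpose D" y] by (simp only: transpose_transpose MTv)
    also have "\<dots> = y \<bullet> ((A ** transpose A) *v y) + lam * (y \<bullet> y)"
      unfolding DD matrix_vector_mult_add_rdistrib scaleR_matrix_vector_assoc[symmetric]
      by (simp add: inner_add_right)
    finally have l: "v \<bullet> (P *v v) = (transpose W *v y) \<bullet> (transpose W *v y) + lam * (y \<bullet> y)"
      by (simp only: qa)
    have r: "v \<bullet> v = y \<bullet> ((transpose B ** B) *v y) + lam * (y \<bullet> y)"
      using Rq[of y] Kq[of y] Ry by simp
    have e: "v \<bullet> (P *v v) = mu * (v \<bullet> v)" using v(2) by simp
    show ?thesis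
      apply (rule arith_bound[where a = "(transpose W *v y) \<bullet> (transpose W *v y)"
            and b = "y \<bullet> ((transpose B ** B) *v y)" and c = "y \<bullet> y" and lam = lam])
      using y0 lam eps qb[of y] l r e by (auto simp: power_le_one)
  qed
  let ?S = "sqrt ` eigenvalues_of P"
  have finS: "finite ?S" using finE by simp
  have neS: "?S \<noteq> {}" using m0 by blast
  obtain mu1 where mu1: "mu1 \<in> eigenvalues_of P" "Max ?S = sqrt mu1" using Max_in[OF finS neS] by blast
  obtain mu2 where mu2: "mu2 \<in> eigenvalues_of P" "Min ?S = sqrt mu2" using Min_in[OF finS neS] by blast
  have e1: "0 < 1 - eps" "0 < 1 + eps" using eps by auto
  have u1: "sqrt mu1 \<le> 1 / (1 - eps)"
  proof -
    have "sqrt mu1 \<le> sqrt (1 / (1 - eps)^2)" using bnd[OF mu1(1)] by (simp del: real_sqrt_le_iff add: real_sqrt_le_mono)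
    also have "\<dots> = 1 / (1 - eps)" using e1 by (simp add: real_sqrt_divide)
    finally show ?thesis .
  qed
  have u2: "1 / (1 + eps) \<le> sqrt mu2"
  proof -
    have "1 / (1 + eps) = sqrt (1 / (1 + eps)^2)" using e1 by (simp add: real_sqrt_divide)
    also have "\<dots> \<le> sqrt mu2" using bnd[OF mu2(1)] by (simp del: real_sqrt_le_iff add: real_sqrt_le_mono)
    finally show ?thesis .
  qed
  have "kappa2 M = sqrt mu1 / sqrt mu2"
    unfolding kappa2_def sigma_max_def sigma_min_def svM mu1(2) mu2(2) ..
  also have "\<dots> \<le> (1 / (1 - eps)) / (1 / (1 + eps))"
    using u1 u2 e1 by (intro frac_le) auto
  also have "\<dots> = (1 + eps) / (1 - eps)" using e1 by simp
  finally show ?thesis unfolding M_def Ri_def D_def .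
qed

end
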